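(* The class $\mathrm{Age}(C_3[I_\omega]^* )$ has the Ramsey property.
   Context: For relational structures $\mathbf A,\mathbf B$ in the same language, $\binom{\mathbf B}{\mathbf A}$ denotes the set of substructures of $\mathbf B$ isomorphic to $\mathbf A$. For $k\ge 1$, $\mathbf C\to(\mathbf B)^{\mathbf A}_k$ means: for every map $c:\binom{\mathbf C}{\mathbf A}\to[k]=\{0,\dots,k-1\}$ there is $\mathbf B'\in\binom{\mathbf C}{\mathbf B}$ such that $c$ is constant on $\binom{\mathbf B'}{\mathbf A}$. A class $\mathcal K$ of finite structures has the Ramsey property if for all $k\ge1$ and all $\mathbf A,\mathbf B\in\mathcal K$ there is $\mathbf C\in\mathcal K$ with $\mathbf C\to(\mathbf B)^{\mathbf A}_k$. The age of a structure is the class of finite structures embeddable in it. $C_3$ is the directed 3-cycle on $[3]=\{0,1,2\}$ with edges $(0,1),(1,2),(2,0)$. Fix a linear order $\prec$ on $\mathbb N$ with $(\mathbb N,\prec)\cong(\mathbb Q,<)$. $C_3[I_\omega]^*$ is the structure with universe $[3]\times\mathbb N$ in the language $\{E,P_0,P_1,P_2,<\}$ where $E((i,a),(j,b))$ iff $(i,j)$ is an edge of $C_3$; $P_i=\{i\}\times\mathbb N$; and $(i,a)<(j,b)$ iff $i<j$, or $i=j$ and $a\prec b$. *)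

theory Defs
  imports Main "HOL.Rat"
begin

text \<open>Structures in the language {E, P0, P1, P2, <}: a universe together with
interpretations of the symbols (only their values on the universe matter).\<close>

record 'a lstr =
  univ :: "'a set"
  relE :: "'a \<Rightarrow> 'a \<Rightarrow> bool"
  relP0 :: "'a \<Rightarrow> bool"
  relP1 :: "'a \<Rightarrow> bool"
  relP2 :: "'a \<Rightarrow> bool"
  relL :: "'a \<Rightarrow> 'a \<Rightarrow> bool"

definition iso_map :: "('a \<Rightarrow> 'b) \<Rightarrow> 'a lstr \<Rightarrow> 'b lstr \<Rightarrow> bool" where
  "iso_map f A B \<longleftrightarrow> bij_betw f (univ A) (univ B) \<and>
     (\<forall>x\<in>univ A. \<forall>y\<in>univ A.
        (relE A x y \<longleftrightarrow> relE B (f x) (f y)) \<and> (relL A x y \<longleftrightarrow> relL B (f x) (f y))) \<and>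
     (\<forall>x\<in>univ A. (relP0 A x \<longleftrightarrow> relP0 B (f x)) \<and> (relP1 A x \<longleftrightarrow> relP1 B (f x))
                 \<and> (relP2 A x \<longleftrightarrow> relP2 B (f x)))"

definition isomorphic :: "'a lstr \<Rightarrow> 'b lstr \<Rightarrow> bool" where
  "isomorphic A B \<longleftrightarrow> (\<exists>f. iso_map f A B)"

definition restr :: "'a lstr \<Rightarrow> 'a set \<Rightarrow> 'a lstr" where
  "restr M S = M\<lparr>univ := S\<rparr>"

definition binom :: "'a lstr \<Rightarrow> 'b lstr \<Rightarrow> 'a set set" where
  "binom C A = {S. S \<subseteq> univ C \<and> isomorphic (restr C S) A}"

definition arrows :: "'a lstr \<Rightarrow> 'b lstr \<Rightarrow> 'c lstr \<Rightarrow> nat \<Rightarrow> bool" where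
  "arrows C B A k \<longleftrightarrow>
     (\<forall>c :: 'a set \<Rightarrow> nat. (\<forall>S\<in>binom C A. c S < k) \<longrightarrow>
        (\<exists>S'\<in>binom C B. \<exists>col. \<forall>T\<in>binom (restr C S') A. c T = col))"

definition embeds :: "'a lstr \<Rightarrow> 'b lstr \<Rightarrow> bool" where
  "embeds A M \<longleftrightarrow> (\<exists>S\<subseteq>univ M. isomorphic (restr M S) A)"

text \<open>The age of M, with finite structures represented on subsets of nat
(every finite structure is isomorphic to one of these).\<close>
definition age :: "'b lstr \<Rightarrow> nat lstr set" where
  "age M = {A. finite (univ A) \<and> embeds A M}"

definition ramsey_property :: "nat lstr set \<Rightarrow> bool" where
  "ramsey_property K \<longleftrightarrow>
     (\<forall>k\<ge>1. \<forall>A\<in>K. \<forall>B\<in>K. \<exists>C\<in>K. arrows C B A k)"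

text \<open>C_3[I_omega]^* with respect to an order prec on nat isomorphic to (Q,<).\<close>
definition C3_edge :: "nat \<Rightarrow> nat \<Rightarrow> bool" where
  "C3_edge i j \<longleftrightarrow> (i, j) \<in> {(0,1), (1,2), (2,0)}"

definition C3_Iomega :: "(nat \<Rightarrow> nat \<Rightarrow> bool) \<Rightarrow> (nat \<times> nat) lstr" where
  "C3_Iomega prec = \<lparr> univ = {0..<3} \<times> UNIV,
     relE = (\<lambda>(i,a) (j,b). C3_edge i j),
     relP0 = (\<lambda>(i,a). i = 0),
     relP1 = (\<lambda>(i,a). i = 1),
     relP2 = (\<lambda>(i,a). i = 2),
     relL = (\<lambda>(i,a) (j,b). i < j \<or> (i = j \<and> prec a b)) \<rparr>"

end

theory Submission
  imports Defs "HOL-Library.Ramsey" "HOL-Library.Product_Lexorder" "HOL-Library.Nat_Bijection"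
begin


lemma P_ramsey:
  fixes Z :: "'z set"
  assumes "finite Z" "k \<ge> (1::nat)"
  shows "\<exists>N. \<forall>c::nat set \<Rightarrow> 'z \<Rightarrow> nat. (\<forall>U\<in>[{..<N}]\<^bsup>a\<^esup>. \<forall>z\<in>Z. c U z < k) \<longrightarrow>
     (\<exists>H\<in>[{..<N}]\<^bsup>b\<^esup>. \<forall>z\<in>Z. \<forall>U\<in>[H]\<^bsup>a\<^esup>. \<forall>V\<in>[H]\<^bsup>a\<^esup>. c U z = c V z)"
proof -
  define F where "F = PiE Z (\<lambda>_. {..<k})"
  have fF: "finite F" unfolding F_def using assms(1) by (simp add: finite_PiE)
  obtain e where e: "bij_betw e F {0..<card F}" using ex_bij_betw_finite_nat[OF fF] by blast
  define r where "r = card F"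
  obtain N :: nat where N: "partn_lst {..<N} (replicate r b) a" using ramsey_full[of "replicate r b" a] by blast
  show ?thesis
  proof (intro exI allI impI)
    fix c :: "nat set \<Rightarrow> 'z \<Rightarrow> nat"
    assume hc: "\<forall>U\<in>[{..<N}]\<^bsup>a\<^esup>. \<forall>z\<in>Z. c U z < k"
    define f where "f U = e (restrict (c U) Z)" for U
    have inF: "restrict (c U) Z \<in> F" if "U \<in> [{..<N}]\<^bsup>a\<^esup>" for U
      using hc that by (auto simp: F_def)
    have "f \<in> [{..<N}]\<^bsup>a\<^esup> \<rightarrow> {..<length (replicate r b)}"
      using inF e unfolding f_def r_def bij_betw_def by auto
    then obtain i where i: "i < r" "monochromatic {..<N} b a f i"
      using N unfolding partn_lst_def by fastforce
    then obtain H where H: "H \<in> [{..<N}]\<^bsup>b\<^esup>" "f ` [H]\<^bsup>a\<^esup> \<subseteq> {i}"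
      unfolding monochromatic_def by auto
    have sub: "[H]\<^bsup>a\<^esup> \<subseteq> [{..<N}]\<^bsup>a\<^esup>" using H(1) by (intro nsets_mono) (auto simp: nsets_def)
    have "\<forall>z\<in>Z. \<forall>U\<in>[H]\<^bsup>a\<^esup>. \<forall>V\<in>[H]\<^bsup>a\<^esup>. c U z = c V z"
    proof (intro ballI)
      fix z U V assume z: "z \<in> Z" and U: "U \<in> [H]\<^bsup>a\<^esup>" and V: "V \<in> [H]\<^bsup>a\<^esup>"
      have "f U = f V" using H(2) U V by auto
      hence "restrict (c U) Z = restrict (c V) Z"
        using e inF U V sub unfolding f_def bij_betw_def inj_on_def by blast
      thus "c U z = c V z" using z by (metis restrict_apply')
    qed
    thus "\<exists>H\<in>[{..<N}]\<^bsup>b\<^esup>. \<forall>z\<in>Z. \<forall>U\<in>[H]\<^bsup>a\<^esup>. \<forall>V\<in>[H]\<^bsup>a\<^esup>. c U z = c V z"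
      using H(1) by blast
  qed
qed

lemma PR:
  assumes k: "k \<ge> (1::nat)"
  shows "\<exists>N0 N1 N2. \<forall>c::nat set\<Rightarrow>nat set\<Rightarrow>nat set\<Rightarrow>nat.
    (\<forall>U0\<in>[{..<N0}]\<^bsup>a0\<^esup>. \<forall>U1\<in>[{..<N1}]\<^bsup>a1\<^esup>. \<forall>U2\<in>[{..<N2}]\<^bsup>a2\<^esup>. c U0 U1 U2 < k) \<longrightarrow>
    (\<exists>H0\<in>[{..<N0}]\<^bsup>b0\<^esup>. \<exists>H1\<in>[{..<N1}]\<^bsup>b1\<^esup>. \<exists>H2\<in>[{..<N2}]\<^bsup>b2\<^esup>. \<exists>col.
       \<forall>U0\<in>[H0]\<^bsup>a0\<^esup>. \<forall>U1\<in>[H1]\<^bsup>a1\<^esup>. \<forall>U2\<in>[H2]\<^bsup>a2\<^esup>. c U0 U1 U2 = col)"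
proof -
  obtain N2 where N2: "\<forall>c::nat set \<Rightarrow> unit \<Rightarrow> nat. (\<forall>U\<in>[{..<N2}]\<^bsup>a2\<^esup>. \<forall>z\<in>{()}. c U z < k) \<longrightarrow>
     (\<exists>H\<in>[{..<N2}]\<^bsup>b2\<^esup>. \<forall>z\<in>{()}. \<forall>U\<in>[H]\<^bsup>a2\<^esup>. \<forall>V\<in>[H]\<^bsup>a2\<^esup>. c U z = c V z)"
    using P_ramsey[of "{()}" k a2 b2] k by auto
  have f2: "finite ([{..<N2}]\<^bsup>a2\<^esup>)" by (simp add: finite_imp_finite_nsets)
  obtain N1 where N1: "\<forall>c::nat set \<Rightarrow> nat set \<Rightarrow> nat. (\<forall>U\<in>[{..<N1}]\<^bsup>a1\<^esup>. \<forall>z\<in>[{..<N2}]\<^bsup>a2\<^esup>. c U z < k) \<longrightarrow>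
     (\<exists>H\<in>[{..<N1}]\<^bsup>b1\<^esup>. \<forall>z\<in>[{..<N2}]\<^bsup>a2\<^esup>. \<forall>U\<in>[H]\<^bsup>a1\<^esup>. \<forall>V\<in>[H]\<^bsup>a1\<^esup>. c U z = c V z)"
    using P_ramsey[OF f2 k, of a1 b1] by auto
  have f1: "finite ([{..<N1}]\<^bsup>a1\<^esup> \<times> [{..<N2}]\<^bsup>a2\<^esup>)" by (simp add: finite_imp_finite_nsets)
  obtain N0 where N0: "\<forall>c::nat set \<Rightarrow> nat set \<times> nat set \<Rightarrow> nat. (\<forall>U\<in>[{..<N0}]\<^bsup>a0\<^esup>. \<forall>z\<in>[{..<N1}]\<^bsup>a1\<^esup> \<times> [{..<N2}]\<^bsup>a2\<^esup>. c U z < k) \<longrightarrow>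
     (\<exists>H\<in>[{..<N0}]\<^bsup>b0\<^esup>. \<forall>z\<in>[{..<N1}]\<^bsup>a1\<^esup> \<times> [{..<N2}]\<^bsup>a2\<^esup>. \<forall>U\<in>[H]\<^bsup>a0\<^esup>. \<forall>V\<in>[H]\<^bsup>a0\<^esup>. c U z = c V z)"
    using P_ramsey[OF f1 k, of a0 b0] by auto
  show ?thesis
  proof (intro exI allI impI)
    fix c :: "nat set\<Rightarrow>nat set\<Rightarrow>nat set\<Rightarrow>nat"
    assume hc: "\<forall>U0\<in>[{..<N0}]\<^bsup>a0\<^esup>. \<forall>U1\<in>[{..<N1}]\<^bsup>a1\<^esup>. \<forall>U2\<in>[{..<N2}]\<^bsup>a2\<^esup>. c U0 U1 U2 < k"
    have hc0: "\<forall>U\<in>[{..<N0}]\<^bsup>a0\<^esup>. \<forall>z\<in>[{..<N1}]\<^bsup>a1\<^esup> \<times> [{..<N2}]\<^bsup>a2\<^esup>. c U (fst z) (snd z) < k"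
      using hc by simp
    obtain H0 where H0: "H0 \<in> [{..<N0}]\<^bsup>b0\<^esup>"
      "\<forall>z\<in>[{..<N1}]\<^bsup>a1\<^esup> \<times> [{..<N2}]\<^bsup>a2\<^esup>. \<forall>U\<in>[H0]\<^bsup>a0\<^esup>. \<forall>V\<in>[H0]\<^bsup>a0\<^esup>. c U (fst z) (snd z) = c V (fst z) (snd z)"
      using mp[OF N0[THEN spec, of "\<lambda>U z. c U (fst z) (snd z)"] hc0] by blast
    have s0: "[H0]\<^bsup>a0\<^esup> \<subseteq> [{..<N0}]\<^bsup>a0\<^esup>" using H0(1) by (intro nsets_mono) (auto simp: nsets_def)
    define U0s where "U0s = (SOME U. U \<in> [H0]\<^bsup>a0\<^esup>)"
    define c1 where "c1 U1 U2 = min (c U0s U1 U2) (k-1)" for U1 U2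
    obtain H1 where H1: "H1 \<in> [{..<N1}]\<^bsup>b1\<^esup>"
      "\<forall>z\<in>[{..<N2}]\<^bsup>a2\<^esup>. \<forall>U\<in>[H1]\<^bsup>a1\<^esup>. \<forall>V\<in>[H1]\<^bsup>a1\<^esup>. c1 U z = c1 V z"
    proof -
      have "\<forall>U\<in>[{..<N1}]\<^bsup>a1\<^esup>. \<forall>z\<in>[{..<N2}]\<^bsup>a2\<^esup>. c1 U z < k" using k unfolding c1_def by (simp add: min_less_iff_disj)
      then show ?thesis using mp[OF N1[THEN spec, of c1]] that by blast
    qed
    have s1: "[H1]\<^bsup>a1\<^esup> \<subseteq> [{..<N1}]\<^bsup>a1\<^esup>" using H1(1) by (intro nsets_mono) (auto simp: nsets_def)
    define U1s where "U1s = (SOME U. U \<in> [H1]\<^bsup>a1\<^esup>)"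
    define c2 where "c2 U2 = min (c1 U1s U2) (k-1)" for U2
    obtain H2 where H2: "H2 \<in> [{..<N2}]\<^bsup>b2\<^esup>"
      "\<forall>U\<in>[H2]\<^bsup>a2\<^esup>. \<forall>V\<in>[H2]\<^bsup>a2\<^esup>. c2 U = c2 V"
    proof -
      have "\<forall>U\<in>[{..<N2}]\<^bsup>a2\<^esup>. \<forall>z\<in>{()}. c2 U < k" using k unfolding c2_def by (simp add: min_less_iff_disj)
      then show ?thesis using mp[OF N2[THEN spec, of "\<lambda>U z. c2 U"]] that by blast
    qed
    have s2: "[H2]\<^bsup>a2\<^esup> \<subseteq> [{..<N2}]\<^bsup>a2\<^esup>" using H2(1) by (intro nsets_mono) (auto simp: nsets_def)
    define col where "col = c2 (SOME U. U \<in> [H2]\<^bsup>a2\<^esup>)"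
    have "\<forall>U0\<in>[H0]\<^bsup>a0\<^esup>. \<forall>U1\<in>[H1]\<^bsup>a1\<^esup>. \<forall>U2\<in>[H2]\<^bsup>a2\<^esup>. c U0 U1 U2 = col"
    proof (intro ballI)
      fix U0 U1 U2 assume U0: "U0 \<in> [H0]\<^bsup>a0\<^esup>" and U1: "U1 \<in> [H1]\<^bsup>a1\<^esup>" and U2: "U2 \<in> [H2]\<^bsup>a2\<^esup>"
      have U0s: "U0s \<in> [H0]\<^bsup>a0\<^esup>" unfolding U0s_def using U0 by (rule someI)
      have U1s: "U1s \<in> [H1]\<^bsup>a1\<^esup>" unfolding U1s_def using U1 by (rule someI)
      have U2s: "(SOME U. U \<in> [H2]\<^bsup>a2\<^esup>) \<in> [H2]\<^bsup>a2\<^esup>" using U2 by (rule someI)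
      have u0: "U0s \<in> [{..<N0}]\<^bsup>a0\<^esup>" using s0 U0s by (rule subsetD)
      have u1: "U1 \<in> [{..<N1}]\<^bsup>a1\<^esup>" using s1 U1 by (rule subsetD)
      have u1s: "U1s \<in> [{..<N1}]\<^bsup>a1\<^esup>" using s1 U1s by (rule subsetD)
      have u2: "U2 \<in> [{..<N2}]\<^bsup>a2\<^esup>" using s2 U2 by (rule subsetD)
      have z: "(U1,U2) \<in> [{..<N1}]\<^bsup>a1\<^esup> \<times> [{..<N2}]\<^bsup>a2\<^esup>" using u1 u2 by simp
      have lt1: "c U0s U1 U2 < k" using hc u0 u1 u2 by simp
      have lt2: "c U0s U1s U2 < k" using hc u0 u1s u2 by simp
      have "c U0 U1 U2 = c U0s U1 U2" using H0(2)[rule_format, OF z U0 U0s] by simp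
      also have "\<dots> = c1 U1 U2" using lt1 unfolding c1_def by simp
      also have "\<dots> = c1 U1s U2" using H1(2)[rule_format, OF u2 U1 U1s] .
      also have "\<dots> = c2 U2" using lt2 unfolding c1_def c2_def by simp
      also have "\<dots> = col" unfolding col_def using H2(2) U2 U2s by blast
      finally show "c U0 U1 U2 = col" .
    qed
    thus "\<exists>H0\<in>[{..<N0}]\<^bsup>b0\<^esup>. \<exists>H1\<in>[{..<N1}]\<^bsup>b1\<^esup>. \<exists>H2\<in>[{..<N2}]\<^bsup>b2\<^esup>. \<exists>col.
       \<forall>U0\<in>[H0]\<^bsup>a0\<^esup>. \<forall>U1\<in>[H1]\<^bsup>a1\<^esup>. \<forall>U2\<in>[H2]\<^bsup>a2\<^esup>. c U0 U1 U2 = col"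
      by (intro bexI[OF _ H0(1)] bexI[OF _ H1(1)] bexI[OF _ H2(1)] exI)
  qed
qed



lemma restr_simps[simp]: "univ (restr M S) = S" "relE (restr M S) = relE M" "relL (restr M S) = relL M"
  "relP0 (restr M S) = relP0 M" "relP1 (restr M S) = relP1 M" "relP2 (restr M S) = relP2 M"
  "restr (restr M S) T = restr M T"
  by (simp_all add: restr_def)

lemma iso_inv:
  assumes h: "iso_map f A B"
  shows "iso_map (inv_into (univ A) f) B A"
proof -
  have b: "bij_betw f (univ A) (univ B)" using h by (simp add: iso_map_def)
  let ?g = "inv_into (univ A) f"
  have g1: "?g x \<in> univ A" if "x \<in> univ B" for x using b that
    by (metis bij_betw_def inv_into_into)
  have g2: "f (?g x) = x" if "x \<in> univ B" for x using b that
    by (simp add: bij_betw_def f_inv_into_f)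
  have gb: "bij_betw ?g (univ B) (univ A)" using b by (rule bij_betw_inv_into)
  have hR: "\<forall>x\<in>univ A. \<forall>y\<in>univ A. (relE A x y \<longleftrightarrow> relE B (f x) (f y)) \<and> (relL A x y \<longleftrightarrow> relL B (f x) (f y))"
    and hP: "\<forall>x\<in>univ A. (relP0 A x \<longleftrightarrow> relP0 B (f x)) \<and> (relP1 A x \<longleftrightarrow> relP1 B (f x)) \<and> (relP2 A x \<longleftrightarrow> relP2 B (f x))"
    using h unfolding iso_map_def by blast+
  show ?thesis unfolding iso_map_def
  proof (intro conjI gb ballI)
    fix x y assume x: "x \<in> univ B" and y: "y \<in> univ B"
    have e: "relE A (?g x) (?g y) = relE B x y" "relL A (?g x) (?g y) = relL B x y"
      using bspec[OF bspec[OF hR g1[OF x]] g1[OF y]] g2[OF x] g2[OF y] by simp_all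
    show "relE B x y = relE A (?g x) (?g y)" using e by simp
    show "relL B x y = relL A (?g x) (?g y)" using e by simp
  next
    fix x assume x: "x \<in> univ B"
    have e: "relP0 A (?g x) = relP0 B x" "relP1 A (?g x) = relP1 B x" "relP2 A (?g x) = relP2 B x"
      using bspec[OF hP g1[OF x]] g2[OF x] by simp_all
    show "relP0 B x = relP0 A (?g x)" using e by simp
    show "relP1 B x = relP1 A (?g x)" using e by simp
    show "relP2 B x = relP2 A (?g x)" using e by simp
  qed
qed

lemma iso_comp:
  assumes "iso_map f A B" "iso_map g B C"
  shows "iso_map (g \<circ> f) A C"
proof -
  have b: "bij_betw f (univ A) (univ B)" using assms by (simp add: iso_map_def)
  have i: "f x \<in> univ B" if "x \<in> univ A" for x using b that by (meson bij_betwE)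
  show ?thesis unfolding iso_map_def
  proof (intro conjI ballI)
    show "bij_betw (g \<circ> f) (univ A) (univ C)" using assms unfolding iso_map_def
      using bij_betw_trans by blast
  next
    fix x y assume x: "x \<in> univ A" and y: "y \<in> univ A"
    show "relE A x y = relE C ((g \<circ> f) x) ((g \<circ> f) y)" using assms i[OF x] i[OF y] x y
      unfolding iso_map_def by simp
    show "relL A x y = relL C ((g \<circ> f) x) ((g \<circ> f) y)" using assms i[OF x] i[OF y] x y
      unfolding iso_map_def by simp
  next
    fix x assume x: "x \<in> univ A"
    show "relP0 A x = relP0 C ((g \<circ> f) x)"
      using assms i[OF x] x unfolding iso_map_def by simp
    show "relP1 A x = relP1 C ((g \<circ> f) x)"
      using assms i[OF x] x unfolding iso_map_def by simp
    show "relP2 A x = relP2 C ((g \<circ> f) x)"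
      using assms i[OF x] x unfolding iso_map_def by simp
  qed
qed

lemma isomorphic_sym: "isomorphic A B \<Longrightarrow> isomorphic B A"
  unfolding isomorphic_def using iso_inv by blast

lemma isomorphic_trans: "isomorphic A B \<Longrightarrow> isomorphic B C \<Longrightarrow> isomorphic A C"
  unfolding isomorphic_def using iso_comp by blast

lemma iso_restr:
  assumes h: "iso_map h C D" and S: "S \<subseteq> univ C"
  shows "iso_map h (restr C S) (restr D (h ` S))"
proof -
  have b: "bij_betw h (univ C) (univ D)" using h by (simp add: iso_map_def)
  have "bij_betw h S (h ` S)" using b S by (meson bij_betw_subset)
  then show ?thesis using h S unfolding iso_map_def by auto
qed

lemma binom_img:
  assumes h: "iso_map h C D" and S: "S \<subseteq> univ C"
  shows "S \<in> binom C A \<longleftrightarrow> h ` S \<in> binom D A"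
proof -
  have b: "bij_betw h (univ C) (univ D)" using h by (simp add: iso_map_def)
  have sub: "h ` S \<subseteq> univ D" using b S by (auto simp: bij_betw_def)
  have i: "isomorphic (restr C S) (restr D (h ` S))" using iso_restr[OF h S] by (auto simp: isomorphic_def)
  have "isomorphic (restr C S) A \<longleftrightarrow> isomorphic (restr D (h ` S)) A"
    using isomorphic_trans[OF i, of A] isomorphic_trans[OF isomorphic_sym[OF i], of A] by blast
  thus ?thesis unfolding binom_def using S sub by simp
qed

lemma binom_restr: "binom (restr X S) A = {T. T \<subseteq> S \<and> isomorphic (restr X T) A}"
  by (simp add: binom_def)

lemma arrows_iso:
  assumes h: "iso_map h C D" and ar: "arrows D B A k"
  shows "arrows C B A k"
  unfolding arrows_def
proof (intro allI impI)
  fix c :: "'a set \<Rightarrow> nat"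
  assume hc: "\<forall>S\<in>binom C A. c S < k"
  have b: "bij_betw h (univ C) (univ D)" using h by (simp add: iso_map_def)
  define c' where "c' T = c (h -` T \<inter> univ C)" for T
  have surjT: "h ` (h -` T \<inter> univ C) = T" if "T \<subseteq> univ D" for T
  proof
    show "h ` (h -` T \<inter> univ C) \<subseteq> T" by blast
    show "T \<subseteq> h ` (h -` T \<inter> univ C)"
    proof
      fix x assume x: "x \<in> T"
      then have "x \<in> h ` univ C" using b that unfolding bij_betw_def by blast
      then obtain y where "y \<in> univ C" "x = h y" by blast
      thus "x \<in> h ` (h -` T \<inter> univ C)" using x by blast
    qed
  qed
  have injS: "h -` (h ` S) \<inter> univ C = S" if "S \<subseteq> univ C" for S
    using b that by (auto simp: bij_betw_def inj_on_def)
  have hc': "\<forall>T\<in>binom D A. c' T < k"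
  proof
    fix T assume T: "T \<in> binom D A"
    hence Tsub: "T \<subseteq> univ D" by (simp add: binom_def)
    have "h -` T \<inter> univ C \<in> binom C A"
      using binom_img[OF h _, of "h -` T \<inter> univ C" A] surjT[OF Tsub] T by simp
    thus "c' T < k" using hc by (simp add: c'_def)
  qed
  have "(\<forall>S\<in>binom D A. c' S < k) \<longrightarrow> (\<exists>S'\<in>binom D B. \<exists>col. \<forall>T\<in>binom (restr D S') A. c' T = col)"
    using ar unfolding arrows_def by (rule spec)
  with hc' obtain S' col where S': "S' \<in> binom D B" and col: "\<forall>T\<in>binom (restr D S') A. c' T = col"
    by blast
  have S'sub: "S' \<subseteq> univ D" using S' by (simp add: binom_def)
  define S'' where "S'' = h -` S' \<inter> univ C"
  have S''sub: "S'' \<subseteq> univ C" by (simp add: S''_def)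
  have imS'': "h ` S'' = S'" using surjT[OF S'sub] by (simp add: S''_def)
  have "S'' \<in> binom C B" using binom_img[OF h S''sub, of B] imS'' S' by simp
  moreover have "\<forall>T\<in>binom (restr C S'') A. c T = col"
  proof
    fix T assume T: "T \<in> binom (restr C S'') A"
    hence TS: "T \<subseteq> S''" and Ti: "isomorphic (restr C T) A" by (auto simp: binom_restr)
    have Tsub: "T \<subseteq> univ C" using TS S''sub by blast
    have "T \<in> binom C A" using Ti Tsub by (simp add: binom_def)
    hence "h ` T \<in> binom D A" using binom_img[OF h Tsub, of A] by blast
    moreover have "h ` T \<subseteq> S'" using TS imS'' by blast
    ultimately have "h ` T \<in> binom (restr D S') A" by (simp add: binom_def)
    hence "c' (h ` T) = col" using col by blast
    thus "c T = col" using injS[OF Tsub] by (simp add: c'_def)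
  qed
  ultimately show "\<exists>S'\<in>binom C B. \<exists>col. \<forall>T\<in>binom (restr C S') A. c T = col" by blast
qed

lemma binom_cong: "isomorphic A A' \<Longrightarrow> binom C A = binom C A'"
proof -
  assume a: "isomorphic A A'"
  have "isomorphic (restr C X) A \<longleftrightarrow> isomorphic (restr C X) A'" for X
    using isomorphic_trans[of "restr C X" A A'] isomorphic_trans[of "restr C X" A' A] a isomorphic_sym[OF a] by blast
  thus ?thesis unfolding binom_def by simp
qed

lemma arrows_cong:
  assumes "isomorphic A A'" "isomorphic B B'" "arrows C B' A' k"
  shows "arrows C B A k"
  using assms(3) unfolding arrows_def binom_cong[OF assms(1)] binom_cong[OF assms(2)] .



definition cnt :: "(nat \<times> 'a) set \<Rightarrow> nat \<Rightarrow> nat" where "cnt S i = card {x\<in>S. fst x = i}"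
definition cl :: "(nat \<times> 'a) set \<Rightarrow> nat \<Rightarrow> nat" where "cl S i = card {x\<in>S. fst x < i}"
definition rk :: "('a \<Rightarrow> 'b::linorder) \<Rightarrow> 'a set \<Rightarrow> 'a \<Rightarrow> nat" where
  "rk \<phi> X x = card {z\<in>X. \<phi> z < \<phi> x}"

lemma rk_mono:
  assumes "finite X" "x \<in> X" "y \<in> X" "\<phi> x < \<phi> y" shows "rk \<phi> X x < rk \<phi> X y"
proof -
  have sub: "{z\<in>X. \<phi> z < \<phi> x} \<subseteq> {z\<in>X. \<phi> z < \<phi> y}"
  proof
    fix z assume "z \<in> {z\<in>X. \<phi> z < \<phi> x}"
    thus "z \<in> {z\<in>X. \<phi> z < \<phi> y}" using less_trans[of "\<phi> z" "\<phi> x" "\<phi> y"] assms(4) by simp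
  qed
  have "x \<in> {z\<in>X. \<phi> z < \<phi> y}" "x \<notin> {z\<in>X. \<phi> z < \<phi> x}" using assms(2,4) by simp_all
  hence "{z\<in>X. \<phi> z < \<phi> x} \<subset> {z\<in>X. \<phi> z < \<phi> y}" using sub by blast
  moreover have "finite {z\<in>X. \<phi> z < \<phi> y}" using assms(1) by simp
  ultimately show ?thesis unfolding rk_def by (simp add: psubset_card_mono)
qed

lemma rk_less_iff:
  assumes "finite X" "inj_on \<phi> X" "x \<in> X" "y \<in> X"
  shows "rk \<phi> X x < rk \<phi> X y \<longleftrightarrow> \<phi> x < \<phi> y"
proof
  assume r: "rk \<phi> X x < rk \<phi> X y"
  show "\<phi> x < \<phi> y"
  proof (rule ccontr)
    assume "\<not> \<phi> x < \<phi> y"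
    hence "\<phi> y < \<phi> x \<or> \<phi> y = \<phi> x" by auto
    thus False
    proof
      assume yx: "\<phi> y < \<phi> x" show False using rk_mono[OF assms(1) assms(4) assms(3) yx] r by simp
    next
      assume "\<phi> y = \<phi> x" hence "x = y" using assms(2-4) by (simp add: inj_on_def)
      thus False using r by simp
    qed
  qed
next
  assume "\<phi> x < \<phi> y" thus "rk \<phi> X x < rk \<phi> X y" by (rule rk_mono[OF assms(1) assms(3) assms(4)])
qed

lemma rk_bij:
  assumes "finite X" "inj_on \<phi> X"
  shows "bij_betw (rk \<phi> X) X {..<card X}"
proof -
  have inj: "inj_on (rk \<phi> X) X"
  proof (rule inj_onI)
    fix x y assume x: "x \<in> X" and y: "y \<in> X" and e: "rk \<phi> X x = rk \<phi> X y"
    have "\<not> \<phi> x < \<phi> y" "\<not> \<phi> y < \<phi> x" using rk_less_iff[OF assms x y] rk_less_iff[OF assms y x] e by auto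
    hence "\<phi> x = \<phi> y" by auto
    thus "x = y" using assms(2) x y by (simp add: inj_on_def)
  qed
  have sub: "rk \<phi> X ` X \<subseteq> {..<card X}"
  proof
    fix r assume "r \<in> rk \<phi> X ` X"
    then obtain x where x: "x \<in> X" "r = rk \<phi> X x" by blast
    have "{z\<in>X. \<phi> z < \<phi> x} \<subset> X" using x by auto
    hence "rk \<phi> X x < card X" unfolding rk_def using assms(1) by (simp add: psubset_card_mono)
    thus "r \<in> {..<card X}" using x by simp
  qed
  have "card (rk \<phi> X ` X) = card {..<card X}" using card_image[OF inj] by simp
  hence "rk \<phi> X ` X = {..<card X}" using sub by (simp add: card_subset_eq)
  thus ?thesis using inj by (simp add: bij_betw_def)
qed

lemma cl_mono: "finite S \<Longrightarrow> i \<le> j \<Longrightarrow> cl S i \<le> cl S j"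
  unfolding cl_def by (rule card_mono) auto

lemma cl_sum: "finite S \<Longrightarrow> cl S i = (\<Sum>j<i. cnt S j)"
proof (induction i)
  case 0 thus ?case by (simp add: cl_def)
next
  case (Suc i)
  have "{x\<in>S. fst x < Suc i} = {x\<in>S. fst x < i} \<union> {x\<in>S. fst x = i}" by auto
  hence "cl S (Suc i) = cl S i + cnt S i" unfolding cl_def cnt_def using Suc.prems
    by (simp add: card_Un_disjoint disjoint_iff)
  thus ?case using Suc by simp
qed

context
  fixes prec :: "nat \<Rightarrow> nat \<Rightarrow> bool" and f :: "nat \<Rightarrow> rat"
  assumes fb: "bij f" and pf: "\<And>a b. prec a b \<longleftrightarrow> f a < f b"
begin

abbreviation key :: "nat \<times> nat \<Rightarrow> nat \<times> rat" where "key \<equiv> \<lambda>x. (fst x, f (snd x))"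

lemma M_simps:
  "univ (C3_Iomega prec) = {0..<3} \<times> UNIV"
  "relE (C3_Iomega prec) x y = C3_edge (fst x) (fst y)"
  "relP0 (C3_Iomega prec) x = (fst x = 0)"
  "relP1 (C3_Iomega prec) x = (fst x = 1)"
  "relP2 (C3_Iomega prec) x = (fst x = 2)"
  "relL (C3_Iomega prec) x y = (key x < key y)"
  by (cases x; cases y; auto simp: C3_Iomega_def pf)+

lemma key_inj: "inj_on key X"
  using fb by (auto simp: inj_on_def bij_def prod_eq_iff)

lemma interval:
  assumes "finite S" "x \<in> S"
  shows "cl S (fst x) \<le> rk key S x \<and> rk key S x < cl S (Suc (fst x))"
proof
  have "{z\<in>S. fst z < fst x} \<subseteq> {z\<in>S. key z < key x}" by (auto simp: less_prod_def')
  thus "cl S (fst x) \<le> rk key S x" unfolding cl_def rk_def using assms(1) by (simp add: card_mono)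
next
  have "{z\<in>S. key z < key x} \<subset> {z\<in>S. fst z < Suc (fst x)}" using assms(2)
    by (auto simp: less_prod_def')
  thus "rk key S x < cl S (Suc (fst x))" unfolding cl_def rk_def using assms(1) by (simp add: psubset_card_mono)
qed

lemma cnt_zero: assumes "S \<subseteq> univ (C3_Iomega prec)" "3 \<le> i" shows "cnt S i = 0"
proof -
  have e: "{x \<in> S. fst x = i} = {}" using assms by (auto simp: M_simps)
  show ?thesis by (simp only: cnt_def e card.empty)
qed

lemma cl3: assumes "S \<subseteq> univ (C3_Iomega prec)" shows "cl S 3 = card S"
proof -
  have e: "{x \<in> S. fst x < 3} = S" using assms by (auto simp: M_simps)
  show ?thesis by (simp only: cl_def e)
qed

lemma iso_of_cnt:
  assumes S: "S \<subseteq> univ (C3_Iomega prec)" and T: "T \<subseteq> univ (C3_Iomega prec)"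
    and fS: "finite S" and fT: "finite T" and c: "\<forall>i. cnt S i = cnt T i"
  shows "isomorphic (restr (C3_Iomega prec) S) (restr (C3_Iomega prec) T)"
proof -
  have clST: "cl S i = cl T i" for i using cl_sum[OF fS] cl_sum[OF fT] c by simp
  have card: "card S = card T" using cl3[OF S] cl3[OF T] clST by simp
  have bS: "bij_betw (rk key S) S {..<card S}" by (rule rk_bij[OF fS key_inj])
  have bT: "bij_betw (rk key T) T {..<card T}" by (rule rk_bij[OF fT key_inj])
  define F where "F = inv_into T (rk key T) \<circ> rk key S"
  have bT': "bij_betw (inv_into T (rk key T)) {..<card S} T" using bij_betw_inv_into[OF bT] card by simp
  have bF: "bij_betw F S T" unfolding F_def using bij_betw_trans[OF bS bT'] .
  have FT: "F x \<in> T" if "x \<in> S" for x using bF that by (meson bij_betwE)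
  have rkF: "rk key T (F x) = rk key S x" if x: "x \<in> S" for x
  proof -
    have "rk key S x \<in> rk key T ` T" using bS bT x card by (auto simp: bij_betw_def)
    thus ?thesis unfolding F_def by (simp add: f_inv_into_f)
  qed
  have fstF: "fst (F x) = fst x" if x: "x \<in> S" for x
  proof (rule ccontr)
    assume ne: "fst (F x) \<noteq> fst x"
    have iS: "cl S (fst x) \<le> rk key S x" "rk key S x < cl S (Suc (fst x))" using interval[OF fS x] by auto
    have iT: "cl T (fst (F x)) \<le> rk key T (F x)" "rk key T (F x) < cl T (Suc (fst (F x)))"
      using interval[OF fT FT[OF x]] by auto
    show False
    proof (cases "fst (F x) < fst x")
      case True
      hence "cl T (Suc (fst (F x))) \<le> cl T (fst x)" using cl_mono[OF fT] by simp
      thus False using iS iT rkF[OF x] clST by (metis leD le_trans)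
    next
      case False
      hence "fst x < fst (F x)" using ne by simp
      hence "cl S (Suc (fst x)) \<le> cl S (fst (F x))" using cl_mono[OF fS] by simp
      thus False using iS iT rkF[OF x] clST by (metis leD le_trans)
    qed
  qed
  have "iso_map F (restr (C3_Iomega prec) S) (restr (C3_Iomega prec) T)"
    unfolding iso_map_def
  proof (intro conjI ballI)
    show "bij_betw F (univ (restr (C3_Iomega prec) S)) (univ (restr (C3_Iomega prec) T))" using bF by simp
  next
    fix x y assume x: "x \<in> univ (restr (C3_Iomega prec) S)" and y: "y \<in> univ (restr (C3_Iomega prec) S)"
    hence x': "x \<in> S" and y': "y \<in> S" by auto
    show "relE (restr (C3_Iomega prec) S) x y = relE (restr (C3_Iomega prec) T) (F x) (F y)"
      using fstF[OF x'] fstF[OF y'] by (simp add: M_simps)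
    have "(key x < key y) = (rk key S x < rk key S y)" using rk_less_iff[OF fS key_inj x' y'] by simp
    also have "\<dots> = (rk key T (F x) < rk key T (F y))" using rkF[OF x'] rkF[OF y'] by simp
    also have "\<dots> = (key (F x) < key (F y))" using rk_less_iff[OF fT key_inj FT[OF x'] FT[OF y']] by simp
    finally show "relL (restr (C3_Iomega prec) S) x y = relL (restr (C3_Iomega prec) T) (F x) (F y)"
      by (simp only: restr_simps M_simps)
  next
    fix x assume x: "x \<in> univ (restr (C3_Iomega prec) S)"
    hence x': "x \<in> S" by auto
    show "relP0 (restr (C3_Iomega prec) S) x = relP0 (restr (C3_Iomega prec) T) (F x)"
      "relP1 (restr (C3_Iomega prec) S) x = relP1 (restr (C3_Iomega prec) T) (F x)"
      "relP2 (restr (C3_Iomega prec) S) x = relP2 (restr (C3_Iomega prec) T) (F x)"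
      using fstF[OF x'] by (simp_all add: M_simps)
  qed
  thus ?thesis by (auto simp: isomorphic_def)
qed

lemma cnt_of_iso:
  assumes S: "S \<subseteq> univ (C3_Iomega prec)" and T: "T \<subseteq> univ (C3_Iomega prec)"
    and h: "iso_map F (restr (C3_Iomega prec) S) (restr (C3_Iomega prec) T)"
  shows "cnt S i = cnt T i"
proof -
  have bF: "bij_betw F S T" using h by (simp add: iso_map_def)
  have FT: "F x \<in> T" if "x \<in> S" for x using bF that by (meson bij_betwE)
  have hP: "\<forall>x\<in>S. (fst x = 0 \<longleftrightarrow> fst (F x) = 0) \<and> (fst x = 1 \<longleftrightarrow> fst (F x) = 1) \<and> (fst x = 2 \<longleftrightarrow> fst (F x) = 2)"
    using h by (simp add: iso_map_def M_simps)
  have fstF: "fst (F x) = fst x" if x: "x \<in> S" for x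
  proof -
    have a: "fst x < 3" using S x by (auto simp: M_simps)
    have b: "fst (F x) < 3" using T FT[OF x] by (auto simp: M_simps)
    have c1: "fst x = 0 \<or> fst x = 1 \<or> fst x = 2" using a by linarith
    have c2: "fst (F x) = 0 \<or> fst (F x) = 1 \<or> fst (F x) = 2" using b by linarith
    show ?thesis using c1 c2 bspec[OF hP x] by auto
  qed
  have "{y\<in>T. fst y = i} = F ` {x\<in>S. fst x = i}"
  proof
    show "F ` {x\<in>S. fst x = i} \<subseteq> {y\<in>T. fst y = i}" using FT fstF by auto
    show "{y\<in>T. fst y = i} \<subseteq> F ` {x\<in>S. fst x = i}"
    proof
      fix y assume y: "y \<in> {y\<in>T. fst y = i}"
      then obtain x where "x \<in> S" "y = F x" using bF by (auto simp: bij_betw_def)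
      thus "y \<in> F ` {x\<in>S. fst x = i}" using y fstF by auto
    qed
  qed
  moreover have "inj_on F {x\<in>S. fst x = i}" using bF by (auto simp: bij_betw_def inj_on_def)
  ultimately show ?thesis unfolding cnt_def by (simp add: card_image)
qed

lemma iso_iff_cnt:
  assumes S: "S \<subseteq> univ (C3_Iomega prec)" and T: "T \<subseteq> univ (C3_Iomega prec)"
    and fS: "finite S" and fT: "finite T"
  shows "isomorphic (restr (C3_Iomega prec) S) (restr (C3_Iomega prec) T) \<longleftrightarrow> (\<forall>i. cnt S i = cnt T i)"
  using iso_of_cnt[OF assms] cnt_of_iso[OF S T] by (auto simp: isomorphic_def)

end



definition Eset :: "(nat \<Rightarrow> 'a) \<Rightarrow> nat set \<Rightarrow> nat set \<Rightarrow> nat set \<Rightarrow> (nat \<times> 'a) set" where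
  "Eset g U0 U1 U2 = (\<lambda>n. (0, g n)) ` U0 \<union> (\<lambda>n. (1, g n)) ` U1 \<union> (\<lambda>n. (2, g n)) ` U2"

lemma Eset_mono: "U0 \<subseteq> V0 \<Longrightarrow> U1 \<subseteq> V1 \<Longrightarrow> U2 \<subseteq> V2 \<Longrightarrow> Eset g U0 U1 U2 \<subseteq> Eset g V0 V1 V2"
  unfolding Eset_def by blast

lemma Eset_finite: "finite U0 \<Longrightarrow> finite U1 \<Longrightarrow> finite U2 \<Longrightarrow> finite (Eset g U0 U1 U2)"
  unfolding Eset_def by simp

lemma Eset_sub: "Eset g U0 U1 U2 \<subseteq> {0..<3} \<times> UNIV"
  unfolding Eset_def by auto

lemma cnt_Eset:
  assumes g: "inj g"
  shows "cnt (Eset g U0 U1 U2) i = (if i = 0 then card U0 else if i = 1 then card U1 else if i = 2 then card U2 else 0)"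
proof -
  have ij: "inj_on (\<lambda>n. (j::nat, g n)) U" for j U using g by (auto simp: inj_on_def inj_def)
  have e0: "{x\<in>Eset g U0 U1 U2. fst x = 0} = (\<lambda>n. (0, g n)) ` U0" unfolding Eset_def by auto
  have e1: "{x\<in>Eset g U0 U1 U2. fst x = 1} = (\<lambda>n. (1, g n)) ` U1" unfolding Eset_def by auto
  have e2: "{x\<in>Eset g U0 U1 U2. fst x = 2} = (\<lambda>n. (2, g n)) ` U2" unfolding Eset_def by auto
  have e3: "{x\<in>Eset g U0 U1 U2. fst x = i} = {}" if "i \<noteq> 0" "i \<noteq> 1" "i \<noteq> 2" unfolding Eset_def using that by auto
  show ?thesis
  proof (cases "i = 0")
    case True thus ?thesis unfolding cnt_def using e0 card_image[OF ij] by simp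
  next
    case n0: False
    show ?thesis
    proof (cases "i = 1")
      case True thus ?thesis unfolding cnt_def using e1 card_image[OF ij] by simp
    next
      case n1: False
      show ?thesis
      proof (cases "i = 2")
        case True thus ?thesis unfolding cnt_def using e2 card_image[OF ij] by simp
      next
        case n2: False
        have "cnt (Eset g U0 U1 U2) i = 0" by (simp only: cnt_def e3[OF n0 n1 n2] card.empty)
        thus ?thesis using n0 n1 n2 by simp
      qed
    qed
  qed
qed

lemma Eset_decomp:
  assumes "T \<subseteq> Eset g V0 V1 V2"
  shows "T = Eset g {n\<in>V0. (0, g n) \<in> T} {n\<in>V1. (1, g n) \<in> T} {n\<in>V2. (2, g n) \<in> T}"
  using assms unfolding Eset_def by blast

lemma cnt_Eset_iff:
  assumes g: "inj g" and a3: "\<And>i. 3 \<le> i \<Longrightarrow> a i = 0"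
  shows "(\<forall>i. cnt (Eset g U0 U1 U2) i = a i) \<longleftrightarrow> card U0 = a 0 \<and> card U1 = a 1 \<and> card U2 = a 2"
proof
  assume h: "\<forall>i. cnt (Eset g U0 U1 U2) i = a i"
  have "cnt (Eset g U0 U1 U2) 0 = a 0" "cnt (Eset g U0 U1 U2) 1 = a 1" "cnt (Eset g U0 U1 U2) 2 = a 2"
    using h by blast+
  thus "card U0 = a 0 \<and> card U1 = a 1 \<and> card U2 = a 2" by (simp add: cnt_Eset[OF g])
next
  assume h: "card U0 = a 0 \<and> card U1 = a 1 \<and> card U2 = a 2"
  show "\<forall>i. cnt (Eset g U0 U1 U2) i = a i"
  proof
    fix i
    show "cnt (Eset g U0 U1 U2) i = a i"
    proof (cases "i < 3")
      case True
      hence "i = 0 \<or> i = 1 \<or> i = 2" by linarith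
      thus ?thesis using h by (auto simp: cnt_Eset[OF g])
    next
      case False
      thus ?thesis using a3[of i] by (simp add: cnt_Eset[OF g])
    qed
  qed
qed



lemma age_rep:
  assumes "A \<in> age M"
  shows "\<exists>S. S \<subseteq> univ M \<and> finite S \<and> isomorphic (restr M S) A"
proof -
  from assms have fA: "finite (univ A)" and "embeds A M" by (auto simp: age_def)
  then obtain S where S: "S \<subseteq> univ M" "isomorphic (restr M S) A" by (auto simp: embeds_def)
  then obtain F where "iso_map F (restr M S) A" by (auto simp: isomorphic_def)
  hence "bij_betw F S (univ A)" by (simp add: iso_map_def)
  hence "finite S" using fA bij_betw_finite by blast
  thus ?thesis using S by blast
qed

theorem theorem5p5:
  fixes prec :: "nat \<Rightarrow> nat \<Rightarrow> bool"
  assumes "\<exists>f :: nat \<Rightarrow> rat. bij f \<and> (\<forall>a b. prec a b \<longleftrightarrow> f a < f b)"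
  shows "ramsey_property (age (C3_Iomega prec))"
proof -
  obtain f :: "nat \<Rightarrow> rat" where fb: "bij f" and pf: "\<And>a b. prec a b \<longleftrightarrow> f a < f b" using assms by blast
  define M where "M = C3_Iomega prec"
  have univM: "univ M = {0..<3} \<times> UNIV" unfolding M_def by (rule M_simps(1)[OF fb pf])
  have isoc: "isomorphic (restr M S) (restr M T) \<longleftrightarrow> (\<forall>i. cnt S i = cnt T i)"
    if "S \<subseteq> univ M" "T \<subseteq> univ M" "finite S" "finite T" for S T
    using iso_iff_cnt[OF fb pf] that unfolding M_def by blast
  define g where "g n = inv f (of_nat n)" for n
  have ginj: "inj g"
  proof (rule injI)
    fix m n assume "g m = g n"
    hence "f (g m) = f (g n)" by simp
    moreover have "f (g x) = of_nat x" for x unfolding g_def using fb by (simp add: bij_def surj_f_inv_f)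
    ultimately show "m = n" by simp
  qed
  show ?thesis unfolding ramsey_property_def M_def[symmetric]
  proof (intro allI impI ballI)
    fix k :: nat and A B assume k: "1 \<le> k" and A: "A \<in> age M" and B: "B \<in> age M"
    obtain SA where SA: "SA \<subseteq> univ M" "finite SA" "isomorphic (restr M SA) A" using age_rep[OF A] by blast
    obtain SB where SB: "SB \<subseteq> univ M" "finite SB" "isomorphic (restr M SB) B" using age_rep[OF B] by blast
    define a where "a i = cnt SA i" for i
    define b where "b i = cnt SB i" for i
    have a3: "a i = 0" if "3 \<le> i" for i unfolding a_def using cnt_zero[OF fb pf _ that] SA(1) unfolding M_def by blast
    have b3: "b i = 0" if "3 \<le> i" for i unfolding b_def using cnt_zero[OF fb pf _ that] SB(1) unfolding M_def by blast
    obtain N0 N1 N2 where N: "\<forall>c::nat set\<Rightarrow>nat set\<Rightarrow>nat set\<Rightarrow>nat.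
      (\<forall>U0\<in>[{..<N0}]\<^bsup>a 0\<^esup>. \<forall>U1\<in>[{..<N1}]\<^bsup>a 1\<^esup>. \<forall>U2\<in>[{..<N2}]\<^bsup>a 2\<^esup>. c U0 U1 U2 < k) \<longrightarrow>
      (\<exists>H0\<in>[{..<N0}]\<^bsup>b 0\<^esup>. \<exists>H1\<in>[{..<N1}]\<^bsup>b 1\<^esup>. \<exists>H2\<in>[{..<N2}]\<^bsup>b 2\<^esup>. \<exists>col.
       \<forall>U0\<in>[H0]\<^bsup>a 0\<^esup>. \<forall>U1\<in>[H1]\<^bsup>a 1\<^esup>. \<forall>U2\<in>[H2]\<^bsup>a 2\<^esup>. c U0 U1 U2 = col)"
      using PR[OF k, of "a 0" "a 1" "a 2" "b 0" "b 1" "b 2"] by blast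
    define SC where "SC = Eset g {..<N0} {..<N1} {..<N2}"
    have SCu: "SC \<subseteq> univ M" unfolding SC_def univM by (rule Eset_sub)
    have SCf: "finite SC" unfolding SC_def by (simp add: Eset_finite)
    have Eu: "Eset g U0 U1 U2 \<subseteq> univ M" for U0 U1 U2 unfolding univM by (rule Eset_sub)
    have EA: "isomorphic (restr M (Eset g U0 U1 U2)) (restr M SA) \<longleftrightarrow> card U0 = a 0 \<and> card U1 = a 1 \<and> card U2 = a 2"
      if "finite U0" "finite U1" "finite U2" for U0 U1 U2
      using isoc[OF Eu SA(1) Eset_finite[OF that] SA(2)] cnt_Eset_iff[OF ginj, of a U0 U1 U2] a3
      unfolding a_def by simp
    have EB: "isomorphic (restr M (Eset g U0 U1 U2)) (restr M SB) \<longleftrightarrow> card U0 = b 0 \<and> card U1 = b 1 \<and> card U2 = b 2"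
      if "finite U0" "finite U1" "finite U2" for U0 U1 U2
      using isoc[OF Eu SB(1) Eset_finite[OF that] SB(2)] cnt_Eset_iff[OF ginj, of b U0 U1 U2] b3
      unfolding b_def by simp
    have main: "arrows (restr M SC) (restr M SB) (restr M SA) k"
      unfolding arrows_def
    proof (intro allI impI)
      fix c :: "(nat \<times> nat) set \<Rightarrow> nat"
      assume hc: "\<forall>S\<in>binom (restr M SC) (restr M SA). c S < k"
      define c0 where "c0 U0 U1 U2 = c (Eset g U0 U1 U2)" for U0 U1 U2
      have hc0: "\<forall>U0\<in>[{..<N0}]\<^bsup>a 0\<^esup>. \<forall>U1\<in>[{..<N1}]\<^bsup>a 1\<^esup>. \<forall>U2\<in>[{..<N2}]\<^bsup>a 2\<^esup>. c0 U0 U1 U2 < k"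
      proof (intro ballI)
        fix U0 U1 U2 assume U0: "U0 \<in> [{..<N0}]\<^bsup>a 0\<^esup>" and U1: "U1 \<in> [{..<N1}]\<^bsup>a 1\<^esup>" and U2: "U2 \<in> [{..<N2}]\<^bsup>a 2\<^esup>"
        have fin: "finite U0" "finite U1" "finite U2" using U0 U1 U2 by (auto simp: nsets_def)
        have sub: "Eset g U0 U1 U2 \<subseteq> SC" unfolding SC_def using U0 U1 U2
          by (intro Eset_mono) (auto simp: nsets_def)
        have "isomorphic (restr M (Eset g U0 U1 U2)) (restr M SA)"
          using EA[OF fin] U0 U1 U2 by (simp add: nsets_def)
        hence "Eset g U0 U1 U2 \<in> binom (restr M SC) (restr M SA)" using sub by (simp add: binom_restr)
        thus "c0 U0 U1 U2 < k" using hc by (simp add: c0_def)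
      qed
      obtain H0 H1 H2 col where H: "H0 \<in> [{..<N0}]\<^bsup>b 0\<^esup>" "H1 \<in> [{..<N1}]\<^bsup>b 1\<^esup>" "H2 \<in> [{..<N2}]\<^bsup>b 2\<^esup>"
        and col: "\<forall>U0\<in>[H0]\<^bsup>a 0\<^esup>. \<forall>U1\<in>[H1]\<^bsup>a 1\<^esup>. \<forall>U2\<in>[H2]\<^bsup>a 2\<^esup>. c0 U0 U1 U2 = col"
        using mp[OF N[THEN spec, of c0] hc0] by blast
      have Hfin: "finite H0" "finite H1" "finite H2" using H by (auto simp: nsets_def)
      define S' where "S' = Eset g H0 H1 H2"
      have S'sub: "S' \<subseteq> SC" unfolding SC_def S'_def using H by (intro Eset_mono) (auto simp: nsets_def)
      have "isomorphic (restr M S') (restr M SB)" unfolding S'_def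
        using EB[OF Hfin] H by (simp add: nsets_def)
      hence S'B: "S' \<in> binom (restr M SC) (restr M SB)" using S'sub by (simp add: binom_restr)
      have "\<forall>T\<in>binom (restr (restr M SC) S') (restr M SA). c T = col"
      proof
        fix T assume T: "T \<in> binom (restr (restr M SC) S') (restr M SA)"
        hence TS: "T \<subseteq> S'" and Ti: "isomorphic (restr M T) (restr M SA)" by (auto simp: binom_restr)
        define U0 where "U0 = {n\<in>H0. (0, g n) \<in> T}"
        define U1 where "U1 = {n\<in>H1. (1, g n) \<in> T}"
        define U2 where "U2 = {n\<in>H2. (2, g n) \<in> T}"
        have Teq: "T = Eset g U0 U1 U2" unfolding U0_def U1_def U2_def
          using Eset_decomp[of T g H0 H1 H2] TS unfolding S'_def by blast
        have Ufin: "finite U0" "finite U1" "finite U2" using Hfin by (auto simp: U0_def U1_def U2_def)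
        have "card U0 = a 0 \<and> card U1 = a 1 \<and> card U2 = a 2" using EA[OF Ufin] Ti Teq by simp
        moreover have "U0 \<subseteq> H0" "U1 \<subseteq> H1" "U2 \<subseteq> H2" by (auto simp: U0_def U1_def U2_def)
        ultimately have "U0 \<in> [H0]\<^bsup>a 0\<^esup>" "U1 \<in> [H1]\<^bsup>a 1\<^esup>" "U2 \<in> [H2]\<^bsup>a 2\<^esup>"
          using Ufin by (auto simp: nsets_def)
        hence "c0 U0 U1 U2 = col" using col by blast
        thus "c T = col" using Teq by (simp add: c0_def)
      qed
      thus "\<exists>S'\<in>binom (restr M SC) (restr M SB). \<exists>col. \<forall>T\<in>binom (restr (restr M SC) S') (restr M SA). c T = col"
        using S'B by blast
    qed
    define C :: "nat lstr" where "C = \<lparr>univ = prod_encode ` SC,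
       relE = \<lambda>x y. relE M (prod_decode x) (prod_decode y),
       relP0 = \<lambda>x. relP0 M (prod_decode x), relP1 = \<lambda>x. relP1 M (prod_decode x),
       relP2 = \<lambda>x. relP2 M (prod_decode x),
       relL = \<lambda>x y. relL M (prod_decode x) (prod_decode y)\<rparr>"
    have bC: "bij_betw prod_decode (prod_encode ` SC) SC"
      by (rule bij_betw_byWitness[where f' = prod_encode]) auto
    have isoC: "iso_map prod_decode C (restr M SC)"
      unfolding iso_map_def C_def using bC by simp
    have "C \<in> age M"
      unfolding age_def embeds_def isomorphic_def
      using SCu SCf iso_inv[OF isoC] by (auto simp: C_def)
    moreover have "arrows C B A k"
    proof (rule arrows_iso[OF isoC])
      show "arrows (restr M SC) B A k"
        by (rule arrows_cong[OF isomorphic_sym[OF SA(3)] isomorphic_sym[OF SB(3)] main])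
    qed
    ultimately show "\<exists>C\<in>age M. arrows C B A k" by blast
  qed
qed


end
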